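(* Let $F(\alpha,\beta)=\frac{1}{\sqrt2}(\gamma(\beta)e^{i\alpha},\gamma(\beta)e^{-i\alpha})$ on $S^1\times S^1$. Then $F$ is a Lagrangian immersion. If $F(\alpha_1,\beta_1)=F(\alpha_2,\beta_2)$ with $(\alpha_1,\beta_1)\neq(\alpha_2,\beta_2)$, then $\rho(\beta_1)=\rho(\beta_2)$, $f(\beta_1)\equiv f(\beta_2)+\pi\pmod{2\pi}$ and $\alpha_1\equiv\alpha_2+\pi\pmod{2\pi}$; each of $(\alpha_1,\beta_1)$ and $(\alpha_2,\beta_2)$ determines the other uniquely, so every self-intersection point of $L_\gamma$ is a double point. At such a double point $\partial_\alpha F(\alpha_1,\beta_1)=\partial_\alpha F(\alpha_2,\beta_2)$, so the self-intersection is never transversal; the two sheets are tangent (span a common $2$-plane) if and only if $\dot\gamma(\beta_1)$ and $\dot\gamma(\beta_2)$ are parallel.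
   Context: Let $\gamma:S^1=\mathbb{R}/2\pi\mathbb{Z}\to\mathbb{C}\setminus\{0\}$ be a smooth regular simple closed curve written as $\gamma(\beta)=\rho(\beta)e^{if(\beta)}$ with $\rho>0$. $\mathbb{C}^2$ carries the standard symplectic form $\frac i2(dz_1\wedge d\bar z_1+dz_2\wedge d\bar z_2)$ and Euclidean metric. $L_\gamma=F(S^1\times S^1)$. *)

theory Defs
  imports "HOL-Analysis.Analysis"
begin

definition vderiv :: "(real \<Rightarrow> 'a::real_normed_vector) \<Rightarrow> real \<Rightarrow> 'a" where
  "vderiv g t = vector_derivative g (at t)"

definition smooth_curve :: "(real \<Rightarrow> 'a::real_normed_vector) \<Rightarrow> bool" where
  "smooth_curve g \<longleftrightarrow> (\<forall>n t. ((vderiv ^^ n) g) differentiable (at t))"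

text \<open>Congruence modulo 2 pi (equality on S^1 = R / 2 pi Z).\<close>
definition cong2pi :: "real \<Rightarrow> real \<Rightarrow> bool" where
  "cong2pi x y \<longleftrightarrow> (\<exists>k::int. x - y = 2 * pi * of_int k)"

definition torus_eq :: "real \<times> real \<Rightarrow> real \<times> real \<Rightarrow> bool" where
  "torus_eq p q \<longleftrightarrow> cong2pi (fst p) (fst q) \<and> cong2pi (snd p) (snd q)"

definition smooth_regular_simple_closed :: "(real \<Rightarrow> complex) \<Rightarrow> bool" where
  "smooth_regular_simple_closed g \<longleftrightarrow>
     smooth_curve g \<and> (\<forall>t. g (t + 2 * pi) = g t) \<and> (\<forall>t. vderiv g t \<noteq> 0)
     \<and> (\<forall>s t. g s = g t \<longrightarrow> cong2pi s t)"

text \<open>The standard symplectic form (i/2)(dz1\<and>dz1bar + dz2\<and>dz2bar) on C^2.\<close>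
definition omega :: "complex \<times> complex \<Rightarrow> complex \<times> complex \<Rightarrow> real" where
  "omega u v = Im (cnj (fst u) * fst v) + Im (cnj (snd u) * snd v)"

definition Fmap :: "(real \<Rightarrow> complex) \<Rightarrow> real \<times> real \<Rightarrow> complex \<times> complex" where
  "Fmap g p = (g (snd p) * exp (\<i> * of_real (fst p)) / of_real (sqrt 2),
               g (snd p) * exp (- \<i> * of_real (fst p)) / of_real (sqrt 2))"

definition lagrangian_immersion :: "(real \<times> real \<Rightarrow> complex \<times> complex) \<Rightarrow> bool" where
  "lagrangian_immersion F \<longleftrightarrow> (\<forall>p. \<exists>D. (F has_derivative D) (at p) \<and> inj D
      \<and> (\<forall>u v. omega (D u) (D v) = 0))"

definition dF_alpha :: "(real \<Rightarrow> complex) \<Rightarrow> real \<times> real \<Rightarrow> complex \<times> complex" where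
  "dF_alpha g p = vector_derivative (\<lambda>a. Fmap g (a, snd p)) (at (fst p))"

definition dF_beta :: "(real \<Rightarrow> complex) \<Rightarrow> real \<times> real \<Rightarrow> complex \<times> complex" where
  "dF_beta g p = vector_derivative (\<lambda>b. Fmap g (fst p, b)) (at (snd p))"

definition tangent_plane :: "(real \<Rightarrow> complex) \<Rightarrow> real \<times> real \<Rightarrow> (complex \<times> complex) set" where
  "tangent_plane g p = span {dF_alpha g p, dF_beta g p}"

definition transversal_at :: "(real \<Rightarrow> complex) \<Rightarrow> real \<times> real \<Rightarrow> real \<times> real \<Rightarrow> bool" where
  "transversal_at g p q \<longleftrightarrow> span (tangent_plane g p \<union> tangent_plane g q) = UNIV"

definition parallel :: "complex \<Rightarrow> complex \<Rightarrow> bool" where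
  "parallel u v \<longleftrightarrow> (\<exists>c::real. u = c *\<^sub>R v \<or> v = c *\<^sub>R u)"

end

theory Submission
  imports Defs
begin

lemma vd_cexp: "((\<lambda>x. exp (c * complex_of_real x)) has_vector_derivative c * exp (c * complex_of_real a)) (at a)"
proof -
  have "((\<lambda>x. c * complex_of_real x) has_vector_derivative c) (at a)"
    using has_vector_derivative_mult_right[OF has_vector_derivative_of_real[OF DERIV_ident]] by simp
  from field_vector_diff_chain_at[OF this DERIV_exp] show ?thesis by (simp add: o_def mult.commute)
qed

lemma vd_alpha:
  "((\<lambda>a. Fmap g (a, b)) has_vector_derivative
     (g b * (\<i> * exp (\<i> * of_real a)) / of_real (sqrt 2),
      g b * (- \<i> * exp (- \<i> * of_real a)) / of_real (sqrt 2))) (at a)"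
  unfolding Fmap_def fst_conv snd_conv
  apply (rule has_vector_derivative_Pair)
  apply (intro has_vector_derivative_mult_right has_vector_derivative_divide vd_cexp)+
  done

lemma vd_beta:
  assumes "g differentiable (at b)"
  shows "((\<lambda>b. Fmap g (a, b)) has_vector_derivative
     (vderiv g b * exp (\<i> * of_real a) / of_real (sqrt 2),
      vderiv g b * exp (- \<i> * of_real a) / of_real (sqrt 2))) (at b)"
proof -
  have g: "(g has_vector_derivative vderiv g b) (at b)"
    using assms by (simp add: vderiv_def vector_derivative_works)
  show ?thesis
  unfolding Fmap_def fst_conv snd_conv
  apply (rule has_vector_derivative_Pair)
  using g
  apply (intro has_vector_derivative_mult_left has_vector_derivative_divide, simp)+
  done
qed

lemma Fmap_deriv:
  assumes "g differentiable (at b)"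
  shows "(Fmap g has_derivative (\<lambda>h. fst h *\<^sub>R
     (g b * (\<i> * exp (\<i> * of_real a)) / of_real (sqrt 2),
      g b * (- \<i> * exp (- \<i> * of_real a)) / of_real (sqrt 2))
   + snd h *\<^sub>R (vderiv g b * exp (\<i> * of_real a) / of_real (sqrt 2),
      vderiv g b * exp (- \<i> * of_real a) / of_real (sqrt 2)))) (at (a, b))"
proof -
  have g: "(g has_derivative (\<lambda>h. h *\<^sub>R vderiv g b)) (at b)"
    using assms by (simp add: vderiv_def vector_derivative_works has_vector_derivative_def)
  have gs: "((\<lambda>p. g (snd p)) has_derivative (\<lambda>h. snd h *\<^sub>R vderiv g b)) (at (a, b))"
    using has_derivative_compose[OF has_derivative_snd[OF has_derivative_ident, of "at (a,b)"], of g] g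
    by (simp add: o_def)
  have he: "((\<lambda>p. exp (c * complex_of_real (fst p))) has_derivative (\<lambda>h. fst h *\<^sub>R (c * exp (c * of_real a)))) (at (a, b))" for c
    using has_derivative_compose[OF has_derivative_fst[OF has_derivative_ident, of "at (a,b)"], 
      of "\<lambda>x. exp (c * complex_of_real x)"] vd_cexp[of c a, unfolded has_vector_derivative_def]
    by (simp add: o_def)
  show ?thesis
    unfolding Fmap_def[abs_def]
    apply (rule has_derivative_eq_rhs)
    apply (rule has_derivative_Pair)
    apply (rule gs he derivative_eq_intros | simp)+
    apply (simp add: fun_eq_iff scaleR_conv_of_real algebra_simps add_divide_distrib diff_divide_distrib)
    done
qed
lemma cnjE: "cnj (exp (\<i> * complex_of_real a)) * exp (\<i> * complex_of_real a) = 1"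
            "cnj (exp (- \<i> * complex_of_real a)) * exp (- \<i> * complex_of_real a) = 1"
  by (simp_all add: exp_cnj flip: exp_add)

lemma cnj_fac:
  assumes "cnj E * E = 1"
  shows "cnj (P * E / complex_of_real (sqrt 2)) * (Q * E / complex_of_real (sqrt 2)) = cnj P * Q / 2"
proof -
  have "cnj (P * E / complex_of_real (sqrt 2)) * (Q * E / complex_of_real (sqrt 2))
     = cnj P * Q * (cnj E * E) / (complex_of_real (sqrt 2) * complex_of_real (sqrt 2))"
    by (simp add: field_simps)
  also have "\<dots> = cnj P * Q / 2" using assms by (simp flip: of_real_mult)
  finally show ?thesis .
qed

lemma omega_zero:
  fixes G W E E' :: complex
  assumes "cnj E * E = 1" "cnj E' * E' = 1"
  defines "A \<equiv> (G * (\<i> * E) / complex_of_real (sqrt 2), G * (- \<i> * E') / complex_of_real (sqrt 2))"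
  defines "B \<equiv> (W * E / complex_of_real (sqrt 2), W * E' / complex_of_real (sqrt 2))"
  shows "omega (x *\<^sub>R A + y *\<^sub>R B) (u *\<^sub>R A + v *\<^sub>R B) = 0"
proof -
  have e1: "fst (r *\<^sub>R A + s *\<^sub>R B) = (of_real r * G * \<i> + of_real s * W) * E / complex_of_real (sqrt 2)" for r s
    by (simp add: A_def B_def scaleR_conv_of_real field_simps)
  have e2: "snd (r *\<^sub>R A + s *\<^sub>R B) = (- of_real r * G * \<i> + of_real s * W) * E' / complex_of_real (sqrt 2)" for r s
    by (simp add: A_def B_def scaleR_conv_of_real field_simps)
  show ?thesis
    unfolding omega_def e1 e2 cnj_fac[OF assms(1)] cnj_fac[OF assms(2)]
    by (simp add: algebra_simps divide_simps)
qed

lemma inj_D: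
  fixes G W E E' :: complex
  assumes nz: "G \<noteq> 0" "W \<noteq> 0" "E \<noteq> 0" "E' \<noteq> 0"
  defines "A \<equiv> (G * (\<i> * E) / complex_of_real (sqrt 2), G * (- \<i> * E') / complex_of_real (sqrt 2))"
  defines "B \<equiv> (W * E / complex_of_real (sqrt 2), W * E' / complex_of_real (sqrt 2))"
  shows "inj (\<lambda>h::real\<times>real. fst h *\<^sub>R A + snd h *\<^sub>R B)"
proof (rule injI)
  fix h k :: "real \<times> real"
  assume eq: "fst h *\<^sub>R A + snd h *\<^sub>R B = fst k *\<^sub>R A + snd k *\<^sub>R B"
  have e1: "fst (r *\<^sub>R A + s *\<^sub>R B) = (of_real r * G * \<i> + of_real s * W) * (E / complex_of_real (sqrt 2))" for r s
    by (simp add: A_def B_def scaleR_conv_of_real field_simps)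
  have e2: "snd (r *\<^sub>R A + s *\<^sub>R B) = (- of_real r * G * \<i> + of_real s * W) * (E' / complex_of_real (sqrt 2))" for r s
    by (simp add: A_def B_def scaleR_conv_of_real field_simps)
  have c1: "of_real (fst h) * G * \<i> + of_real (snd h) * W = of_real (fst k) * G * \<i> + of_real (snd k) * W"
    using arg_cong[OF eq, of fst] nz unfolding e1 by simp
  have c2: "- of_real (fst h) * G * \<i> + of_real (snd h) * W = - of_real (fst k) * G * \<i> + of_real (snd k) * W"
    using arg_cong[OF eq, of snd] nz unfolding e2 by simp
  have "2 * of_real (snd h) * W = 2 * of_real (snd k) * W"
    using arg_cong2[OF c1 c2, of "(+)"] by (simp add: algebra_simps)
  hence s: "snd h = snd k" using nz by simp
  have "2 * of_real (fst h) * G * \<i> = 2 * of_real (fst k) * G * \<i>"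
    using arg_cong2[OF c1 c2, of "(-)"] by (simp add: algebra_simps)
  hence "fst h = fst k" using nz by simp
  with s show "h = k" by (simp add: prod_eq_iff)
qed

lemma exp_cong:
  assumes "exp (\<i> * complex_of_real x) = exp (\<i> * complex_of_real y)"
  shows "cong2pi x y"
proof -
  obtain n :: int where "\<i> * complex_of_real x = \<i> * complex_of_real y + (of_int (2 * n) * pi) * \<i>"
    using assms exp_eq by blast
  hence "Im (\<i> * complex_of_real x) = Im (\<i> * complex_of_real y + (of_int (2 * n) * pi) * \<i>)" by simp
  hence "x = y + 2 * pi * of_int n" by simp
  thus ?thesis unfolding cong2pi_def by (intro exI[of _ n]) simp
qed

lemma cong_exp:
  assumes "cong2pi x y"
  shows "exp (\<i> * complex_of_real x) = exp (\<i> * complex_of_real y)"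
        "exp (- \<i> * complex_of_real x) = exp (- \<i> * complex_of_real y)"
proof -
  obtain k :: int where k: "x = y + 2 * pi * of_int k" using assms unfolding cong2pi_def
    by (metis add.commute diff_add_cancel)
  have "exp (\<i> * complex_of_real x) = exp (\<i> * complex_of_real y + of_int (2 * k) * pi * \<i>)"
    by (simp add: k algebra_simps)
  also have "\<dots> = exp (\<i> * complex_of_real y)" by (metis exp_eq)
  finally show "exp (\<i> * complex_of_real x) = exp (\<i> * complex_of_real y)" .
  have "exp (- \<i> * complex_of_real x) = exp (- \<i> * complex_of_real y + of_int (2 * (-k)) * pi * \<i>)"
    by (simp add: k algebra_simps)
  also have "\<dots> = exp (- \<i> * complex_of_real y)" by (metis exp_eq)
  finally show "exp (- \<i> * complex_of_real x) = exp (- \<i> * complex_of_real y)" .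
qed

lemma cong2pi_trans: "cong2pi x y \<Longrightarrow> cong2pi y z \<Longrightarrow> cong2pi x z"
  unfolding cong2pi_def
proof (elim exE)
  fix k l :: int assume "x - y = 2 * pi * of_int k" "y - z = 2 * pi * of_int l"
  hence "x - z = 2 * pi * of_int (k + l)" by (simp add: algebra_simps)
  thus "\<exists>k::int. x - z = 2 * pi * of_int k" by blast
qed

lemma cong2pi_sym: "cong2pi x y \<Longrightarrow> cong2pi y x"
  unfolding cong2pi_def
proof (elim exE)
  fix k :: int assume "x - y = 2 * pi * of_int k"
  hence "y - x = 2 * pi * of_int (- k)" by (simp add: algebra_simps)
  thus "\<exists>k::int. y - x = 2 * pi * of_int k" by blast
qed

lemma exp_pi_shift: "exp (\<i> * complex_of_real (y + pi)) = - exp (\<i> * complex_of_real y)"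
  "exp (- \<i> * complex_of_real (y + pi)) = - exp (- \<i> * complex_of_real y)"
proof -
  show "exp (\<i> * complex_of_real (y + pi)) = - exp (\<i> * complex_of_real y)"
    by (simp add: algebra_simps exp_add)
  have "- \<i> * complex_of_real (y + pi) = - \<i> * complex_of_real y + (- (\<i> * pi))"
    by (simp add: algebra_simps)
  thus "exp (- \<i> * complex_of_real (y + pi)) = - exp (- \<i> * complex_of_real y)"
    by (simp only: exp_add) (simp add: exp_minus)
qed

lemma not_univ3:
  fixes A B C :: "complex \<times> complex"
  shows "span (span {A, B} \<union> span {A, C}) \<noteq> UNIV"
proof
  assume u: "span (span {A, B} \<union> span {A, C}) = UNIV"
  have "span {A, B} \<union> span {A, C} \<subseteq> span {A, B, C}"
    by (intro Un_least span_mono) auto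
  hence "span (span {A, B} \<union> span {A, C}) \<subseteq> span {A, B, C}"
    by (metis span_mono span_span)
  hence "UNIV \<subseteq> span (set [A, B, C])" using u by simp
  hence "dim (UNIV :: (complex \<times> complex) set) \<le> card (set [A, B, C])"
    by (intro dim_le_card) auto
  also have "\<dots> \<le> 3" using card_length[of "[A, B, C]"] by simp
  finally show False by simp
qed

lemma span2_mem:
  fixes A B x :: "'a::real_vector"
  assumes "x \<in> span {A, B}"
  shows "\<exists>r s. x = r *\<^sub>R A + s *\<^sub>R B"
proof -
  obtain r where "x - r *\<^sub>R A \<in> span {B}" using assms span_breakdown_eq by blast
  then obtain s where "x - r *\<^sub>R A = s *\<^sub>R B" by (auto simp: span_singleton)
  hence "x = r *\<^sub>R A + s *\<^sub>R B" by (simp add: algebra_simps)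
  thus ?thesis by blast
qed

lemma parallel_neg: "parallel u (- v) \<longleftrightarrow> parallel u v"
  unfolding parallel_def
proof
  assume "\<exists>c. u = c *\<^sub>R - v \<or> - v = c *\<^sub>R u"
  then obtain c where "u = c *\<^sub>R - v \<or> - v = c *\<^sub>R u" by blast
  hence "u = (- c) *\<^sub>R v \<or> v = (- c) *\<^sub>R u"
    by (metis minus_minus scaleR_minus_left scaleR_minus_right)
  thus "\<exists>c. u = c *\<^sub>R v \<or> v = c *\<^sub>R u" by blast
next
  assume "\<exists>c. u = c *\<^sub>R v \<or> v = c *\<^sub>R u"
  then obtain c where "u = c *\<^sub>R v \<or> v = c *\<^sub>R u" by blast
  hence "u = (- c) *\<^sub>R - v \<or> - v = (- c) *\<^sub>R u"
    by (metis minus_minus scaleR_minus_left scaleR_minus_right)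
  thus "\<exists>c. u = c *\<^sub>R - v \<or> - v = c *\<^sub>R u" by blast
qed

lemma tp_eq:
  fixes G Wp Wq E E' :: complex
  assumes nz: "G \<noteq> 0" "Wp \<noteq> 0" "Wq \<noteq> 0" "E \<noteq> 0" "E' \<noteq> 0"
  defines "A \<equiv> (G * (\<i> * E) / complex_of_real (sqrt 2), G * (- \<i> * E') / complex_of_real (sqrt 2))"
  defines "B1 \<equiv> (Wp * E / complex_of_real (sqrt 2), Wp * E' / complex_of_real (sqrt 2))"
  defines "B2 \<equiv> (Wq * E / complex_of_real (sqrt 2), Wq * E' / complex_of_real (sqrt 2))"
  shows "span {A, B1} = span {A, B2} \<longleftrightarrow> parallel Wp Wq"
proof
  assume "span {A, B1} = span {A, B2}"
  hence "B2 \<in> span {A, B1}" by (simp add: span_base)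
  then obtain r s where rs: "B2 = r *\<^sub>R A + s *\<^sub>R B1" using span2_mem by blast
  have c1: "Wq = of_real r * G * \<i> + of_real s * Wp"
  proof -
    have "Wq * (E / complex_of_real (sqrt 2)) = (of_real r * G * \<i> + of_real s * Wp) * (E / complex_of_real (sqrt 2))"
      using arg_cong[OF rs, of fst] by (simp add: A_def B1_def B2_def scaleR_conv_of_real field_simps)
    thus ?thesis using nz by simp
  qed
  have c2: "Wq = - of_real r * G * \<i> + of_real s * Wp"
  proof -
    have "Wq * (E' / complex_of_real (sqrt 2)) = (- of_real r * G * \<i> + of_real s * Wp) * (E' / complex_of_real (sqrt 2))"
      using arg_cong[OF rs, of snd] by (simp add: A_def B1_def B2_def scaleR_conv_of_real field_simps)
    thus ?thesis using nz by simp
  qed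
  have "2 * Wq = 2 * (of_real s * Wp)" using arg_cong2[OF c1 c2, of "(+)"] by (simp add: algebra_simps)
  hence "Wq = s *\<^sub>R Wp" by (simp add: scaleR_conv_of_real)
  thus "parallel Wp Wq" unfolding parallel_def by blast
next
  have key: "span {A, B1} = span {A, B2}" if "Wq = c *\<^sub>R Wp" "c \<noteq> 0" for c
  proof -
    have b2: "B2 = c *\<^sub>R B1" using that by (simp add: B1_def B2_def scaleR_conv_of_real)
    hence b1: "B1 = (1 / c) *\<^sub>R B2" using that by simp
    have "B2 \<in> span {A, B1}" unfolding b2 by (intro span_scale span_base) simp
    moreover have "B1 \<in> span {A, B2}" unfolding b1 by (intro span_scale span_base) simp
    ultimately show ?thesis unfolding span_eq
      by (auto intro: span_base)
  qed
  assume "parallel Wp Wq"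
  then obtain c where "Wp = c *\<^sub>R Wq \<or> Wq = c *\<^sub>R Wp" unfolding parallel_def by blast
  thus "span {A, B1} = span {A, B2}"
  proof
    assume h: "Wp = c *\<^sub>R Wq"
    hence "c \<noteq> 0" using nz by auto
    hence "Wq = (1 / c) *\<^sub>R Wp" "1 / c \<noteq> 0" using h by auto
    thus ?thesis by (rule key)
  next
    assume h: "Wq = c *\<^sub>R Wp"
    hence "c \<noteq> 0" using nz by auto
    thus ?thesis using h by (intro key)
  qed
qed

lemma dFa: "dF_alpha g p = (\<i> * fst (Fmap g p), - \<i> * snd (Fmap g p))"
proof -
  obtain a b where p: "p = (a, b)" by (cases p)
  show ?thesis unfolding dF_alpha_def p fst_conv snd_conv
    using vector_derivative_at[OF vd_alpha[of g b a]]
    by (simp add: Fmap_def)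
qed

lemma dFb: "g differentiable (at (snd p)) \<Longrightarrow> dF_beta g p =
     (vderiv g (snd p) * exp (\<i> * of_real (fst p)) / of_real (sqrt 2),
      vderiv g (snd p) * exp (- \<i> * of_real (fst p)) / of_real (sqrt 2))"
  unfolding dF_beta_def using vector_derivative_at[OF vd_beta] by simp

lemma double:
  fixes g :: "real \<Rightarrow> complex"
  assumes nz: "\<And>b. g b \<noteq> 0" and simple: "\<And>s t. g s = g t \<Longrightarrow> cong2pi s t"
    and eq: "Fmap g p = Fmap g q" and nt: "\<not> torus_eq p q"
  shows "cong2pi (fst p) (fst q + pi) \<and> g (snd p) = - g (snd q)"
proof -
  obtain a1 b1 where p: "p = (a1, b1)" by (cases p)
  obtain a2 b2 where q: "q = (a2, b2)" by (cases q)
  define E1 where "E1 = exp (\<i> * complex_of_real a1)"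
  define E1' where "E1' = exp (- \<i> * complex_of_real a1)"
  define E2 where "E2 = exp (\<i> * complex_of_real a2)"
  define E2' where "E2' = exp (- \<i> * complex_of_real a2)"
  have e1: "g b1 * E1 = g b2 * E2" and e2: "g b1 * E1' = g b2 * E2'"
    using eq unfolding p q Fmap_def E1_def E1'_def E2_def E2'_def by auto
  have m1: "E1 * E1' = 1" "E2 * E2' = 1" unfolding E1_def E1'_def E2_def E2'_def
    by (simp_all flip: exp_add)
  have "g b1 * g b1 = g b2 * g b2"
  proof -
    have "g b1 * g b1 = (g b1 * E1) * (g b1 * E1')" using m1 by (simp add: algebra_simps)
    also have "\<dots> = (g b2 * E2) * (g b2 * E2')" using e1 e2 by simp
    also have "\<dots> = g b2 * g b2" using m1 by (simp add: algebra_simps)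
    finally show ?thesis .
  qed
  hence "(g b1 - g b2) * (g b1 + g b2) = 0" by (simp add: algebra_simps)
  hence "g b1 = g b2 \<or> g b1 = - g b2" by (auto simp: add_eq_0_iff)
  moreover have "g b1 \<noteq> g b2"
  proof
    assume h: "g b1 = g b2"
    hence "E1 = E2" using e1 nz[of b2] by simp
    hence "cong2pi a1 a2" unfolding E1_def E2_def by (rule exp_cong)
    moreover have "cong2pi b1 b2" using h simple by blast
    ultimately show False using nt unfolding p q torus_eq_def by simp
  qed
  ultimately have h: "g b1 = - g b2" by blast
  hence "g b2 * (- E1) = g b2 * E2" using e1 by simp
  hence "- E1 = E2" using nz[of b2] mult_left_cancel by blast
  hence "E1 = - E2" by (metis minus_minus)
  hence "exp (\<i> * complex_of_real a1) = exp (\<i> * complex_of_real (a2 + pi))"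
    unfolding E1_def E2_def exp_pi_shift by simp
  hence "cong2pi a1 (a2 + pi)" by (rule exp_cong)
  thus ?thesis using h p q by simp
qed

lemma cong2pi_shift: "cong2pi (x + pi) (y + pi) \<longleftrightarrow> cong2pi x y"
  unfolding cong2pi_def by simp

theorem mainTheorem13:
  fixes \<gamma> :: "real \<Rightarrow> complex" and \<rho> f :: "real \<Rightarrow> real"
  assumes curve: "smooth_regular_simple_closed \<gamma>"
    and rho_pos: "\<And>b. \<rho> b > 0"
    and polar: "\<And>b. \<gamma> b = of_real (\<rho> b) * exp (\<i> * of_real (f b))"
  shows "lagrangian_immersion (Fmap \<gamma>)
    \<and> (\<forall>a1 b1 a2 b2. Fmap \<gamma> (a1, b1) = Fmap \<gamma> (a2, b2) \<and> \<not> torus_eq (a1, b1) (a2, b2) \<longrightarrow>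
          \<rho> b1 = \<rho> b2 \<and> cong2pi (f b1) (f b2 + pi) \<and> cong2pi a1 (a2 + pi))
    \<and> (\<forall>p q r. Fmap \<gamma> p = Fmap \<gamma> q \<and> Fmap \<gamma> p = Fmap \<gamma> r
          \<and> \<not> torus_eq p q \<and> \<not> torus_eq p r \<longrightarrow> torus_eq q r)
    \<and> (\<forall>p q. Fmap \<gamma> p = Fmap \<gamma> q \<and> \<not> torus_eq p q \<longrightarrow>
          dF_alpha \<gamma> p = dF_alpha \<gamma> q
          \<and> \<not> transversal_at \<gamma> p q
          \<and> (tangent_plane \<gamma> p = tangent_plane \<gamma> q
               \<longleftrightarrow> parallel (vderiv \<gamma> (snd p)) (vderiv \<gamma> (snd q))))"
proof -
  have smooth: "smooth_curve \<gamma>" and vnz: "\<And>t. vderiv \<gamma> t \<noteq> 0"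
    and simple: "\<And>s t. \<gamma> s = \<gamma> t \<Longrightarrow> cong2pi s t"
    using curve unfolding smooth_regular_simple_closed_def by blast+
  have gdiff: "\<And>t. \<gamma> differentiable (at t)"
    using smooth unfolding smooth_curve_def by (metis funpow_0)
  have gnz: "\<And>b. \<gamma> b \<noteq> 0" using polar rho_pos by (metis exp_not_eq_zero mult_eq_0_iff of_real_eq_0_iff order_less_irrefl)
  have normg: "\<And>b. norm (\<gamma> b) = \<rho> b" using polar rho_pos
    by (metis abs_of_pos mult.right_neutral norm_exp_i_times norm_mult norm_of_real)
  have P1: "lagrangian_immersion (Fmap \<gamma>)"
    unfolding lagrangian_immersion_def
  proof
    fix p :: "real \<times> real"
    obtain a b where p: "p = (a, b)" by (cases p)
    show "\<exists>D. (Fmap \<gamma> has_derivative D) (at p) \<and> inj D \<and> (\<forall>u v. omega (D u) (D v) = 0)"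
      unfolding p
      apply (rule exI, rule conjI, rule Fmap_deriv[OF gdiff], rule conjI)
       apply (rule inj_D; simp add: gnz vnz)
      using omega_zero[OF cnjE] by blast
  qed
  have P2: "\<rho> b1 = \<rho> b2 \<and> cong2pi (f b1) (f b2 + pi) \<and> cong2pi a1 (a2 + pi)"
    if "Fmap \<gamma> (a1, b1) = Fmap \<gamma> (a2, b2)" "\<not> torus_eq (a1, b1) (a2, b2)" for a1 b1 a2 b2
  proof -
    have d: "cong2pi a1 (a2 + pi)" "\<gamma> b1 = - \<gamma> b2"
      using double[OF gnz simple that] by auto
    have r: "\<rho> b1 = \<rho> b2" using normg d(2) by (metis norm_minus_cancel)
    have "of_real (\<rho> b2) * exp (\<i> * of_real (f b1)) = of_real (\<rho> b2) * exp (\<i> * of_real (f b2 + pi))"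
      unfolding exp_pi_shift using d(2) polar[of b1] polar[of b2] r by simp
    hence "exp (\<i> * of_real (f b1)) = exp (\<i> * of_real (f b2 + pi))"
      using rho_pos[of b2] by simp
    hence "cong2pi (f b1) (f b2 + pi)" by (rule exp_cong)
    thus ?thesis using r d by blast
  qed
  have P3: "torus_eq q r"
    if "Fmap \<gamma> p = Fmap \<gamma> q" "Fmap \<gamma> p = Fmap \<gamma> r" "\<not> torus_eq p q" "\<not> torus_eq p r" for p q r
  proof -
    have d1: "cong2pi (fst p) (fst q + pi)" "\<gamma> (snd p) = - \<gamma> (snd q)"
      using double[OF gnz simple that(1,3)] by auto
    have d2: "cong2pi (fst p) (fst r + pi)" "\<gamma> (snd p) = - \<gamma> (snd r)"
      using double[OF gnz simple that(2,4)] by auto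
    have "cong2pi (fst q + pi) (fst r + pi)"
      using cong2pi_trans[OF cong2pi_sym[OF d1(1)] d2(1)] .
    hence "cong2pi (fst q) (fst r)" by (simp add: cong2pi_shift)
    moreover have "cong2pi (snd q) (snd r)" using d1(2) d2(2) simple by simp
    ultimately show ?thesis unfolding torus_eq_def by simp
  qed
  have P4: "dF_alpha \<gamma> p = dF_alpha \<gamma> q
          \<and> \<not> transversal_at \<gamma> p q
          \<and> (tangent_plane \<gamma> p = tangent_plane \<gamma> q
               \<longleftrightarrow> parallel (vderiv \<gamma> (snd p)) (vderiv \<gamma> (snd q)))"
    if eq: "Fmap \<gamma> p = Fmap \<gamma> q" and nt: "\<not> torus_eq p q" for p q
  proof -
    obtain a1 b1 where p: "p = (a1, b1)" by (cases p)
    obtain a2 b2 where q: "q = (a2, b2)" by (cases q)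
    have da: "dF_alpha \<gamma> p = dF_alpha \<gamma> q" unfolding dFa eq ..
    have nt': "\<not> transversal_at \<gamma> p q"
      unfolding transversal_at_def tangent_plane_def da by (rule not_univ3)
    have d: "cong2pi a1 (a2 + pi)" using double[OF gnz simple eq nt] p q by simp
    define E where "E = exp (\<i> * complex_of_real a1)"
    define E' where "E' = exp (- \<i> * complex_of_real a1)"
    have q1: "exp (\<i> * complex_of_real a2) = - E" "exp (- \<i> * complex_of_real a2) = - E'"
      using cong_exp[OF d] unfolding E_def E'_def exp_pi_shift by simp_all
    have A: "dF_alpha \<gamma> p = (\<gamma> b1 * (\<i> * E) / complex_of_real (sqrt 2), \<gamma> b1 * (- \<i> * E') / complex_of_real (sqrt 2))"
      unfolding dFa p E_def E'_def by (simp add: Fmap_def)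
    have B1: "dF_beta \<gamma> p = (vderiv \<gamma> b1 * E / complex_of_real (sqrt 2), vderiv \<gamma> b1 * E' / complex_of_real (sqrt 2))"
      unfolding dFb[OF gdiff] p E_def E'_def by simp
    have B2: "dF_beta \<gamma> q = ((- vderiv \<gamma> b2) * E / complex_of_real (sqrt 2), (- vderiv \<gamma> b2) * E' / complex_of_real (sqrt 2))"
      unfolding dFb[OF gdiff] q using q1 by simp
    have "tangent_plane \<gamma> p = tangent_plane \<gamma> q \<longleftrightarrow> parallel (vderiv \<gamma> b1) (- vderiv \<gamma> b2)"
      unfolding tangent_plane_def da[symmetric] A B1 B2
      by (rule tp_eq) (simp_all add: gnz vnz E_def E'_def)
    thus ?thesis using da nt' p q parallel_neg by simp
  qed
  show ?thesis using P1 P2 P3 P4 by blast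
qed

end
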